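(* Let $f_1,\dots,f_N$, $\Phi$, $c$, $\sigma$, $x_k$ and $d_k$ be as in Algorithm X described in the context. Then at every iteration $k$ the backtracking loop terminates after finitely many steps; that is, if $d_k\ne0$ there exists a nonnegative integer $j$ such that $\Phi(x_k+\sigma^jd_k)<\Phi(x_k)+c\sigma^j\Phi'(x_k;d_k)$ (and if $d_k=0$ the loop terminates immediately).
   Context: Standing assumptions: $f_1,\dots,f_N:\mathbb{R}^n\to\mathbb{R}$; (H1) there is $M\in\mathbb{R}$ with $f_j(x)\ge M$ for all $x$ and $j$; (H2) each $f_j\in C^1(\mathbb{R}^n)$ and there is a modulus of continuity $w$ (increasing $w:[0,\infty)\to[0,\infty)$, $w(0)=0$, continuous at $0$) with $\|\nabla f_j(x)-\nabla f_j(y)\|\le w(\|x-y\|)$ for all $x,y$ and $j$. Let $\Phi(x)=\max_{1\le j\le N}f_j(x)$, and $g'(x;d)=\lim_{t\to0^+}\frac{g(x+td)-g(x)}{t}$ denotes the directional derivative. Algorithm X: set $x_0=0$, $c=\sigma=\tfrac12$. At iteration $k$: let $G\in\mathbb{R}^{N\times n}$ have $j$-th row $\nabla f_j(x_k)^T$, $f=(f_1(x_k),\dots,f_N(x_k))^T$; let $\lambda$ be a solution of $\min_\lambda(\tfrac12\lambda^TGG^T\lambda-f^T\lambda)$ subject to $\sum_i\lambda_i=1$, $\lambda_i\ge0$; set $p_k=-G^T\lambda$, and $d_k=0$ if $p_k=0$, otherwise $d_k=p_k/\|p_k\|$. Backtracking loop: for $j=0,1,2,\dots$, with $\alpha=\sigma^j$: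 stop if $d_k=0$, or if $\Phi(x_k+\alpha d_k)<\Phi(x_k)+c\alpha\Phi'(x_k;d_k)$; otherwise increase $j$. With the final $\alpha$ set $\alpha_k=\alpha$, $x_{k+1}=x_k+\alpha_kd_k$, and repeat. *)

theory Defs
  imports "HOL-Analysis.Analysis"
begin

text \<open>Functions f_0, ..., f_(N-1) are indexed by nat, only indices below N matter.
  Gradients are given by a function gf with gf j x the gradient of f j at x.\<close>

definition Phi :: "(nat \<Rightarrow> 'a \<Rightarrow> real) \<Rightarrow> nat \<Rightarrow> 'a \<Rightarrow> real" where
  "Phi f N x = Max ((\<lambda>j. f j x) ` {..<N})"

definition dir_deriv :: "('a::real_normed_vector \<Rightarrow> real) \<Rightarrow> 'a \<Rightarrow> 'a \<Rightarrow> real" where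
  "dir_deriv g x d = Lim (at_right 0) (\<lambda>t. (g (x + t *\<^sub>R d) - g x) / t)"

definition qp_obj :: "(nat \<Rightarrow> 'a \<Rightarrow> real) \<Rightarrow> (nat \<Rightarrow> 'a \<Rightarrow> 'a::real_inner) \<Rightarrow> nat
    \<Rightarrow> 'a \<Rightarrow> (nat \<Rightarrow> real) \<Rightarrow> real" where
  "qp_obj f gf N x lam =
     (1/2) * (\<Sum>i<N. \<Sum>j<N. lam i * (gf i x \<bullet> gf j x) * lam j) - (\<Sum>i<N. f i x * lam i)"

definition std_simplex :: "nat \<Rightarrow> (nat \<Rightarrow> real) set" where
  "std_simplex N = {lam. (\<forall>i<N. 0 \<le> lam i) \<and> (\<Sum>i<N. lam i) = 1}"

definition is_qp_sol :: "(nat \<Rightarrow> 'a \<Rightarrow> real) \<Rightarrow> (nat \<Rightarrow> 'a \<Rightarrow> 'a::real_inner) \<Rightarrow> nat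
    \<Rightarrow> 'a \<Rightarrow> (nat \<Rightarrow> real) \<Rightarrow> bool" where
  "is_qp_sol f gf N x lam \<longleftrightarrow>
     lam \<in> std_simplex N \<and> (\<forall>mu \<in> std_simplex N. qp_obj f gf N x lam \<le> qp_obj f gf N x mu)"

definition pdir :: "(nat \<Rightarrow> 'a \<Rightarrow> 'a::real_normed_vector) \<Rightarrow> nat \<Rightarrow> 'a \<Rightarrow> (nat \<Rightarrow> real) \<Rightarrow> 'a" where
  "pdir gf N x lam = - (\<Sum>i<N. lam i *\<^sub>R gf i x)"

definition ddir :: "(nat \<Rightarrow> 'a \<Rightarrow> 'a::real_normed_vector) \<Rightarrow> nat \<Rightarrow> 'a \<Rightarrow> (nat \<Rightarrow> real) \<Rightarrow> 'a" where
  "ddir gf N x lam = (let p = pdir gf N x lam in if p = 0 then 0 else (1 / norm p) *\<^sub>R p)"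

text \<open>Armijo condition with c = sigma = 1/2 and alpha = sigma^j.\<close>
definition armijo :: "(nat \<Rightarrow> 'a \<Rightarrow> real) \<Rightarrow> nat \<Rightarrow> 'a::real_normed_vector \<Rightarrow> 'a \<Rightarrow> nat \<Rightarrow> bool" where
  "armijo f N x d j \<longleftrightarrow>
     Phi f N (x + ((1/2::real) ^ j) *\<^sub>R d)
       < Phi f N x + (1/2) * ((1/2::real) ^ j) * dir_deriv (Phi f N) x d"

definition bt_stop :: "(nat \<Rightarrow> 'a \<Rightarrow> real) \<Rightarrow> nat \<Rightarrow> 'a::real_normed_vector \<Rightarrow> 'a \<Rightarrow> nat \<Rightarrow> bool" where
  "bt_stop f N x d j \<longleftrightarrow> d = 0 \<or> armijo f N x d j"

end

theory Submission
  imports Defs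
begin


lemma qp_obj_alt:
  "qp_obj f gf N x mu = (1/2) * ((\<Sum>i<N. mu i *\<^sub>R gf i x) \<bullet> (\<Sum>i<N. mu i *\<^sub>R gf i x)) - (\<Sum>i<N. f i x * mu i)"
  proof -
  have "(\<Sum>i<N. mu i *\<^sub>R gf i x) \<bullet> (\<Sum>i<N. mu i *\<^sub>R gf i x) = (\<Sum>i<N. \<Sum>j<N. mu i * (gf i x \<bullet> gf j x) * mu j)"
    by (simp add: inner_sum_left inner_sum_right sum_distrib_left, subst sum.swap, simp add: mult_ac)
  thus ?thesis unfolding qp_obj_def by simp
qed

lemma S_lin:
  "(\<Sum>i<N. (a i + t * (b i - a i)) *\<^sub>R (g i :: 'a::real_vector)) = (\<Sum>i<N. a i *\<^sub>R g i) + t *\<^sub>R ((\<Sum>i<N. b i *\<^sub>R g i) - (\<Sum>i<N. a i *\<^sub>R g i))"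
  by (simp add: algebra_simps sum.distrib scaleR_sum_right sum_subtractf)

lemma F_lin:
  "(\<Sum>i<N. c i * (a i + t * (b i - a i))) = (\<Sum>i<N. (c i::real) * a i) + t * ((\<Sum>i<N. c i * b i) - (\<Sum>i<N. c i * a i))"
proof -
  have "(\<Sum>i<N. c i * (a i + t * (b i - a i))) = (\<Sum>i<N. c i * a i + t * (c i * b i - c i * a i))"
    by (intro sum.cong refl) (simp add: distrib_left right_diff_distrib mult.left_commute)
  thus ?thesis by (simp add: sum.distrib sum_distrib_left sum_subtractf right_diff_distrib)
qed

lemma ej_sum: "(j::nat) < N \<Longrightarrow> (\<Sum>i<N. (if i = j then 1 else 0) *\<^sub>R (g i :: 'a::real_vector)) = g j"
proof -
  assume "j < N"
  have "(\<Sum>i<N. (if i = j then 1 else 0) *\<^sub>R g i) = (\<Sum>i<N. if i = j then g i else 0)"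
    by (intro sum.cong refl) auto
  also have "\<dots> = g j" using \<open>j < N\<close> by (simp add: sum.delta[OF finite_lessThan])
  finally show ?thesis .
qed
lemma ej_sum2: "(j::nat) < N \<Longrightarrow> (\<Sum>i<N. c i * (if i = j then 1 else 0)) = (c j::real)"
proof -
  assume "j < N"
  have "(\<Sum>i<N. c i * (if i = j then 1 else 0)) = (\<Sum>i<N. if i = j then c i else 0)"
    by (intro sum.cong refl) auto
  also have "\<dots> = c j" using \<open>j < N\<close> by (simp add: sum.delta[OF finite_lessThan])
  finally show ?thesis .
qed

lemma small_t: fixes a b :: real assumes "b \<ge> 0" "\<And>t. 0 < t \<Longrightarrow> t \<le> 1 \<Longrightarrow> a + t * b \<ge> 0" shows "a \<ge> 0"
proof (rule ccontr)
  assume "\<not> a \<ge> 0"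
  define t where "t = min 1 (-a/(b+1))"
  have t: "0 < t" "t \<le> 1" using \<open>\<not> a \<ge> 0\<close> assms(1) by (auto simp: t_def divide_neg_pos)
  have "t * b < -a"
  proof -
    have "t \<le> (-a)/(b+1)" by (simp add: t_def)
    moreover have "0 < b + 1" using assms(1) by simp
    ultimately have "t * (b+1) \<le> ((-a)/(b+1)) * (b+1)" by (intro mult_right_mono) auto
    hence "t * (b+1) \<le> -a" using \<open>0 < b + 1\<close> by simp
    thus ?thesis using t by (simp add: algebra_simps)
  qed
  with assms(2)[OF t] show False by linarith
qed

lemma qp_first_order:
  fixes gf :: "nat \<Rightarrow> 'a \<Rightarrow> 'a::real_inner"
  assumes qp: "is_qp_sol f gf N x lam" and j: "j < N"
  shows "gf j x \<bullet> pdir gf N x lam + (pdir gf N x lam \<bullet> pdir gf N x lam) \<le> (\<Sum>i<N. f i x * lam i) - f j x"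
proof -
  define S where "S mu = (\<Sum>i<N. mu i *\<^sub>R gf i x)" for mu
  define F where "F mu = (\<Sum>i<N. f i x * mu i)" for mu
  define e where "e = (\<lambda>i. if i = j then 1 else (0::real))"
  define p where "p = pdir gf N x lam"
  have p: "p = - S lam" by (simp add: p_def pdir_def S_def)
  have Se: "S e = gf j x" using j by (simp add: S_def e_def ej_sum)
  have Fe: "F e = f j x" using j by (simp add: F_def e_def ej_sum2)
  have lam: "lam \<in> std_simplex N" and opt: "\<And>mu. mu \<in> std_simplex N \<Longrightarrow> qp_obj f gf N x lam \<le> qp_obj f gf N x mu"
    using qp by (auto simp: is_qp_sol_def)
  define v where "v = gf j x + p"
  have H: "(- p \<bullet> v - (f j x - F lam)) + t * ((1/2) * (v \<bullet> v)) \<ge> 0" if t: "0 < t" "t \<le> 1" for t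
  proof -
    define mu where "mu i = lam i + t * (e i - lam i)" for i
    have "mu \<in> std_simplex N"
    proof -
      have "\<forall>i<N. 0 \<le> mu i"
      proof (intro allI impI)
        fix i assume "i < N"
        hence "0 \<le> lam i" using lam by (auto simp: std_simplex_def)
        moreover have "0 \<le> e i" "e i \<le> 1" by (auto simp: e_def)
        ultimately have "0 \<le> (1 - t) * lam i + t * e i" using t by (intro add_nonneg_nonneg mult_nonneg_nonneg) auto
        thus "0 \<le> mu i" by (simp add: mu_def algebra_simps)
      qed
      moreover have "(\<Sum>i<N. mu i) = 1"
      proof -
        have "(\<Sum>i<N. mu i) = (\<Sum>i<N. 1 * mu i)" by simp
        also have "\<dots> = (\<Sum>i<N. 1 * lam i) + t * ((\<Sum>i<N. 1 * e i) - (\<Sum>i<N. 1 * lam i))"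
          unfolding mu_def by (rule F_lin)
        also have "\<dots> = 1" using lam j by (simp add: std_simplex_def e_def ej_sum2[of j N "\<lambda>_. 1", simplified])
        finally show ?thesis .
      qed
      ultimately show ?thesis by (simp add: std_simplex_def)
    qed
    hence le: "qp_obj f gf N x lam \<le> qp_obj f gf N x mu" by (rule opt)
    have Smu: "S mu = - p + t *\<^sub>R v"
      unfolding S_def mu_def S_lin using Se p by (simp add: S_def v_def algebra_simps)
    have Fmu: "F mu = F lam + t * (f j x - F lam)"
      unfolding F_def mu_def F_lin using Fe by (simp add: F_def)
    have "qp_obj f gf N x mu - qp_obj f gf N x lam = t * ((- p \<bullet> v - (f j x - F lam)) + t * ((1/2) * (v \<bullet> v)))"
      unfolding qp_obj_alt S_def[symmetric] F_def[symmetric] Smu Fmu p[symmetric]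
      using p by (simp add: algebra_simps inner_add_left inner_add_right inner_commute[of v "S lam"])
    with le have "0 \<le> t * ((- p \<bullet> v - (f j x - F lam)) + t * ((1/2) * (v \<bullet> v)))" by linarith
    thus ?thesis using t by (simp add: zero_le_mult_iff)
  qed
  have b0: "0 \<le> (1/2) * (v \<bullet> v)" by simp
  have "- p \<bullet> v - (f j x - F lam) \<ge> 0" by (rule small_t[OF b0 H])
  thus ?thesis by (simp add: v_def p_def[symmetric] F_def inner_add_right inner_commute[of p "gf j x"] algebra_simps)
qed

lemma dq_lim:
  fixes F :: "'a::real_inner \<Rightarrow> real"
  assumes "(F has_derivative (\<lambda>h. g \<bullet> h)) (at x)"
  shows "((\<lambda>t. (F (x + t *\<^sub>R d) - F x) / t) \<longlongrightarrow> g \<bullet> d) (at_right 0)"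
proof -
  have "((\<lambda>t. x + t *\<^sub>R d) has_derivative (\<lambda>h. h *\<^sub>R d)) (at 0)"
    by (auto intro!: derivative_eq_intros)
  moreover have "(F has_derivative (\<lambda>h. g \<bullet> h)) (at ((\<lambda>t. x + t *\<^sub>R d) 0))" using assms by simp
  ultimately have "((\<lambda>t. F (x + t *\<^sub>R d)) has_derivative (\<lambda>h. g \<bullet> (h *\<^sub>R d))) (at 0)"
    by (rule has_derivative_compose[of "\<lambda>t. x + t *\<^sub>R d" "\<lambda>h. h *\<^sub>R d" 0 UNIV F "\<lambda>h. g \<bullet> h"])
  hence "((\<lambda>t. F (x + t *\<^sub>R d)) has_field_derivative (g \<bullet> d)) (at 0)"
  proof -
    have "(\<lambda>h. g \<bullet> (h *\<^sub>R d)) = (*) (g \<bullet> d)" by (rule ext) simp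
    thus ?thesis using \<open>((\<lambda>t. F (x + t *\<^sub>R d)) has_derivative (\<lambda>h. g \<bullet> (h *\<^sub>R d))) (at 0)\<close>
      by (simp only: has_field_derivative_def)
  qed
  hence "((\<lambda>t. F (x + t *\<^sub>R d)) has_field_derivative (g \<bullet> d)) (at 0 within {0<..})"
    by (rule has_field_derivative_at_within)
  hence "((\<lambda>t. (F (x + t *\<^sub>R d) - F (x + 0 *\<^sub>R d)) / (t - 0)) \<longlongrightarrow> g \<bullet> d) (at 0 within {0<..})"
    by (simp only: has_field_derivative_iff)
  thus ?thesis by simp
qed

lemma armijo_exists:
  fixes f :: "nat \<Rightarrow> 'a::real_inner \<Rightarrow> real" and gf :: "nat \<Rightarrow> 'a \<Rightarrow> 'a"
  assumes N: "N \<ge> 1"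
    and grad: "\<And>j x. j < N \<Longrightarrow> (f j has_derivative (\<lambda>h. gf j x \<bullet> h)) (at x)"
    and qp: "is_qp_sol f gf N x lam" and dne: "ddir gf N x lam \<noteq> 0"
  shows "\<exists>j. armijo f N x (ddir gf N x lam) j"
proof -
  define p where "p = pdir gf N x lam"
  define d where "d = ddir gf N x lam"
  have pne: "p \<noteq> 0" using dne by (auto simp: p_def ddir_def Let_def)
  have d: "d = (1 / norm p) *\<^sub>R p" using pne by (simp add: d_def ddir_def p_def Let_def)
  define P where "P = Phi f N x"
  define A where "A = {j. j < N \<and> f j x = P}"
  have fin: "finite ((\<lambda>j. f j x) ` {..<N})" by simp
  have ne: "(\<lambda>j. f j x) ` {..<N} \<noteq> {}" using N by (auto simp: lessThan_empty_iff)
  have Pge: "f j x \<le> P" if "j < N" for j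
    unfolding P_def Phi_def using fin that by (intro Max_ge) auto
  obtain j0 where j0: "j0 < N" "f j0 x = P"
    using Max_in[OF fin ne] unfolding P_def Phi_def by auto
  have j0A: "j0 \<in> A" using j0 by (simp add: A_def)
  have finA: "finite A" by (simp add: A_def)
  have Fle: "(\<Sum>i<N. f i x * lam i) \<le> P"
  proof -
    have lam: "\<forall>i<N. 0 \<le> lam i" "(\<Sum>i<N. lam i) = 1" using qp by (auto simp: is_qp_sol_def std_simplex_def)
    have "(\<Sum>i<N. f i x * lam i) \<le> (\<Sum>i<N. P * lam i)"
      using lam Pge by (intro sum_mono mult_right_mono) auto
    also have "\<dots> = P" using lam by (simp add: sum_distrib_left[symmetric])
    finally show ?thesis .
  qed
  have key: "gf j x \<bullet> d \<le> - norm p" if "j \<in> A" for j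
  proof -
    have j: "j < N" "f j x = P" using that by (auto simp: A_def)
    have "gf j x \<bullet> p + p \<bullet> p \<le> 0"
      using qp_first_order[OF qp j(1)] j Fle by (simp add: p_def)
    hence "gf j x \<bullet> p \<le> - (norm p * norm p)" by (simp add: power2_norm_eq_inner[symmetric] power2_eq_square)
    hence "(1 / norm p) * (gf j x \<bullet> p) \<le> (1 / norm p) * (- (norm p * norm p))"
      using pne by (intro mult_left_mono) auto
    thus ?thesis using pne by (simp add: d)
  qed
  define D where "D = Max ((\<lambda>j. gf j x \<bullet> d) ` A)"
  have DA: "D \<in> (\<lambda>j. gf j x \<bullet> d) ` A" unfolding D_def using finA j0A by (intro Max_in) auto
  have Dge: "gf j x \<bullet> d \<le> D" if "j \<in> A" for j unfolding D_def using finA that by (intro Max_ge) auto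
  have Dneg: "D < 0"
  proof -
    obtain jD where "jD \<in> A" "D = gf jD x \<bullet> d" using DA by auto
    hence "D \<le> - norm p" using key by simp
    moreover have "norm p > 0" using pne by simp
    ultimately show ?thesis by linarith
  qed
  define q where "q j t = (f j (x + t *\<^sub>R d) - f j x) / t" for j t
  have qlim: "(q j \<longlongrightarrow> gf j x \<bullet> d) (at_right 0)" if "j < N" for j
    unfolding q_def by (rule dq_lim[OF grad[OF that]])
  have cont: "((\<lambda>t. f j (x + t *\<^sub>R d)) \<longlongrightarrow> f j x) (at_right 0)" if "j < N" for j
  proof -
    have "isCont (f j) x" using grad[OF that] by (rule has_derivative_continuous)
    moreover have "((\<lambda>t. x + t *\<^sub>R d) \<longlongrightarrow> x) (at_right (0::real))"
      by (auto intro!: tendsto_eq_intros)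
    ultimately show ?thesis by (rule isCont_tendsto_compose)
  qed
  have ev2: "eventually (\<lambda>t. \<forall>j\<in>{..<N} - A. f j (x + t *\<^sub>R d) < f j0 (x + t *\<^sub>R d)) (at_right 0)"
  proof (rule eventually_ball_finite)
    show "finite ({..<N} - A)" by simp
    show "\<forall>j\<in>{..<N} - A. eventually (\<lambda>t. f j (x + t *\<^sub>R d) < f j0 (x + t *\<^sub>R d)) (at_right 0)"
    proof
      fix j assume j: "j \<in> {..<N} - A"
      hence "f j x < f j0 x" using Pge[of j] j0 by (auto simp: A_def)
      moreover have "((\<lambda>t. f j0 (x + t *\<^sub>R d) - f j (x + t *\<^sub>R d)) \<longlongrightarrow> f j0 x - f j x) (at_right 0)"
        using j j0 by (intro tendsto_diff cont) auto
      ultimately have "eventually (\<lambda>t. f j0 (x + t *\<^sub>R d) - f j (x + t *\<^sub>R d) > 0) (at_right 0)"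
        by (intro order_tendstoD(1)) auto
      thus "eventually (\<lambda>t. f j (x + t *\<^sub>R d) < f j0 (x + t *\<^sub>R d)) (at_right 0)"
        by (rule eventually_mono) auto
    qed
  qed
  have lim: "((\<lambda>t. (Phi f N (x + t *\<^sub>R d) - P) / t) \<longlongrightarrow> D) (at_right 0)"
  proof (rule tendstoI)
    fix e :: real assume e: "e > 0"
    have ev1: "eventually (\<lambda>t. \<forall>j\<in>A. dist (q j t) (gf j x \<bullet> d) < e) (at_right 0)"
      using finA e qlim by (intro eventually_ball_finite) (auto simp: A_def intro: tendstoD)
    have ev3: "eventually (\<lambda>t. t > 0) (at_right (0::real))" by (simp add: eventually_at_right_less)
    show "eventually (\<lambda>t. dist ((Phi f N (x + t *\<^sub>R d) - P) / t) D < e) (at_right 0)"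
      using ev1 ev2 ev3
    proof eventually_elim
      case (elim t)
      have fint: "finite ((\<lambda>j. f j (x + t *\<^sub>R d)) ` {..<N})" by simp
      have net: "(\<lambda>j. f j (x + t *\<^sub>R d)) ` {..<N} \<noteq> {}" using N by (auto simp: lessThan_empty_iff)
      obtain jt where jt: "jt < N" "f jt (x + t *\<^sub>R d) = Phi f N (x + t *\<^sub>R d)"
        using Max_in[OF fint net] unfolding Phi_def by auto
      have ge: "f j (x + t *\<^sub>R d) \<le> Phi f N (x + t *\<^sub>R d)" if "j < N" for j
        unfolding Phi_def using fint that by (intro Max_ge) auto
      have jtA: "jt \<in> A"
      proof (rule ccontr)
        assume "jt \<notin> A"
        hence "jt \<in> {..<N} - A" using jt by simp
        hence "f jt (x + t *\<^sub>R d) < f j0 (x + t *\<^sub>R d)" using elim(2) by blast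
        with ge[OF j0(1)] jt show False by simp
      qed
      have eq: "(Phi f N (x + t *\<^sub>R d) - P) / t = q jt t"
        using jt jtA by (simp add: q_def A_def)
      have up: "q jt t < D + e"
        using elim jtA Dge[OF jtA] by (auto simp: dist_real_def)
      obtain jD where jD: "jD \<in> A" "gf jD x \<bullet> d = D" using DA by auto
      have "q jD t \<le> (Phi f N (x + t *\<^sub>R d) - P) / t"
        unfolding q_def using jD elim ge[of jD] by (intro divide_right_mono) (auto simp: A_def)
      moreover have "q jD t > D - e" using elim jD by (auto simp: dist_real_def)
      ultimately show ?case using eq up by (simp add: dist_real_def abs_less_iff)
    qed
  qed
  have dd: "dir_deriv (Phi f N) x d = D"
    unfolding dir_deriv_def P_def[symmetric] using lim by (intro tendsto_Lim) auto
  have "eventually (\<lambda>t. (Phi f N (x + t *\<^sub>R d) - P) / t < D / 2) (at_right 0)"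
    using lim Dneg by (intro order_tendstoD(2)) auto
  then obtain b where b: "b > 0" "\<And>t. 0 < t \<Longrightarrow> t < b \<Longrightarrow> (Phi f N (x + t *\<^sub>R d) - P) / t < D / 2"
    unfolding eventually_at_right_field by auto
  obtain j where j: "(1/2::real) ^ j < b" using real_arch_pow_inv[OF b(1), of "1/2"] by auto
  have pos: "(0::real) < (1/2) ^ j" by simp
  have "(Phi f N (x + ((1/2::real) ^ j) *\<^sub>R d) - P) / (1/2) ^ j < D / 2" using b(2)[OF pos j] .
  hence "Phi f N (x + ((1/2::real) ^ j) *\<^sub>R d) - P < D / 2 * (1/2) ^ j"
    using pos by (simp add: divide_less_eq)
  hence "armijo f N x d j" unfolding armijo_def dd P_def[symmetric] by (simp add: algebra_simps)
  thus ?thesis unfolding d_def by blast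
qed

theorem theorem4:
  fixes f :: "nat \<Rightarrow> real ^ 'n \<Rightarrow> real"
    and gf :: "nat \<Rightarrow> real ^ 'n \<Rightarrow> real ^ 'n"
    and N :: nat and M :: real and w :: "real \<Rightarrow> real"
    and xs :: "nat \<Rightarrow> real ^ 'n" and lams :: "nat \<Rightarrow> nat \<Rightarrow> real"
  assumes N: "N \<ge> 1"
    and H1: "\<And>j x. j < N \<Longrightarrow> f j x \<ge> M"
    and grad: "\<And>j x. j < N \<Longrightarrow> (f j has_derivative (\<lambda>h. gf j x \<bullet> h)) (at x)"
    and C1: "\<And>j. j < N \<Longrightarrow> continuous_on UNIV (gf j)"
    and w_mono: "mono_on {0..} w" and w0: "w 0 = 0" and w_cont: "continuous (at_right 0) w"
    and H2: "\<And>j x y. j < N \<Longrightarrow> norm (gf j x - gf j y) \<le> w (norm (x - y))"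
    and x0: "xs 0 = 0"
    and qp: "\<And>k. is_qp_sol f gf N (xs k) (lams k)"
    and step: "\<And>k. xs (Suc k) = xs k + ((1/2::real) ^ (LEAST j. bt_stop f N (xs k) (ddir gf N (xs k) (lams k)) j))
                                         *\<^sub>R ddir gf N (xs k) (lams k)"
  shows "\<forall>k. (\<exists>j. bt_stop f N (xs k) (ddir gf N (xs k) (lams k)) j) \<and>
             (ddir gf N (xs k) (lams k) \<noteq> 0 \<longrightarrow>
                (\<exists>j. armijo f N (xs k) (ddir gf N (xs k) (lams k)) j))"
proof -
  have A: "\<And>k. ddir gf N (xs k) (lams k) \<noteq> 0 \<Longrightarrow> \<exists>j. armijo f N (xs k) (ddir gf N (xs k) (lams k)) j"
    by (rule armijo_exists[OF N grad qp])
  show ?thesis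
  proof (intro allI conjI impI)
    fix k
    show "\<exists>j. bt_stop f N (xs k) (ddir gf N (xs k) (lams k)) j"
    proof (cases "ddir gf N (xs k) (lams k) = 0")
      case True
      hence "bt_stop f N (xs k) (ddir gf N (xs k) (lams k)) 0" by (simp add: bt_stop_def)
      thus ?thesis ..
    next
      case False
      then obtain j where "armijo f N (xs k) (ddir gf N (xs k) (lams k)) j" using A by blast
      hence "bt_stop f N (xs k) (ddir gf N (xs k) (lams k)) j" by (simp add: bt_stop_def)
      thus ?thesis ..
    qed
    show "ddir gf N (xs k) (lams k) \<noteq> 0 \<Longrightarrow> \<exists>j. armijo f N (xs k) (ddir gf N (xs k) (lams k)) j"
      by (rule A)
  qed
qed

end
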